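(* Let $t\geq 3$, $E_t=\{1,\ldots,t\}$, and let $A$ be a nonempty subset of $E_t$, written as a disjoint union of intervals of integers $A=[i_1,j_1]\,\dot\cup\,[i_2,j_2]\,\dot\cup\cdots\dot\cup\,[i_\varrho,j_\varrho]$ with $i_k\le j_k$ and $j_k+2\le i_{k+1}$ for $1\le k\le\varrho-1$. Let $T:={}_{-A}\mathrm{T}^{(+)}\in\{1,-1\}^t$ be the vector with $T(e)=-1$ for $e\in A$ and $T(e)=1$ otherwise. Then: (i) If $\{1,t\}\cap A=\{1\}$ (so $i_1=1$), then $\mathfrak{q}(T)=2\varrho-1$, $\boldsymbol{x}(T)=\sum_{k=1}^{\varrho}\boldsymbol{\sigma}(j_k+1)-\sum_{\ell=2}^{\varrho}\boldsymbol{\sigma}(i_\ell)$; moreover $\mathfrak{q}(\mathrm{ro}(T))=2\varrho-1$, $\boldsymbol{x}(\mathrm{ro}(T))=\sum_{k=1}^{\varrho}\boldsymbol{\sigma}(t-j_k+1)-\sum_{\ell=2}^{\varrho}\boldsymbol{\sigma}(t-i_\ell+2)$, and $\boldsymbol{x}(\mathrm{ro}(T))=\boldsymbol{x}(T)\,\overline{\mathbf{U}}(t)\,\overline{\mathbf{T}}(t)$. (ii) If $\{1,t\}\cap A=\{1,t\}$ (so $i_1=1$, $j_\varrho=t$), then $\mathfrak{q}(T)=2\varrho-1$, $\boldsymbol{x}(T)=-\boldsymbol{\sigma}(1)+\sum_{k=1}^{\varrho-1}\boldsymbol{\sigma}(j_k+1)-\sum_{\ell=2}^{\varrho}\boldsymbol{\sigma}(i_\ell)$;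 moreover $\mathfrak{q}(\mathrm{ro}(T))=2\varrho-1$, $\boldsymbol{x}(\mathrm{ro}(T))=\boldsymbol{\sigma}(1)+\sum_{k=1}^{\varrho-1}\boldsymbol{\sigma}(t-j_k+1)-\sum_{\ell=2}^{\varrho}\boldsymbol{\sigma}(t-i_\ell+2)$, and $\boldsymbol{x}(\mathrm{ro}(T))=\boldsymbol{\sigma}(1)+\boldsymbol{x}(T)\,\overline{\mathbf{U}}(t)\,\overline{\mathbf{T}}(t)$. (iii) If $\{1,t\}\cap A=\emptyset$, then $\mathfrak{q}(T)=2\varrho+1$, $\boldsymbol{x}(T)=\boldsymbol{\sigma}(1)+\sum_{k=1}^{\varrho}\boldsymbol{\sigma}(j_k+1)-\sum_{\ell=1}^{\varrho}\boldsymbol{\sigma}(i_\ell)$; moreover $\mathfrak{q}(\mathrm{ro}(T))=2\varrho+1$, $\boldsymbol{x}(\mathrm{ro}(T))=-\boldsymbol{\sigma}(1)+\sum_{k=1}^{\varrho}\boldsymbol{\sigma}(t-j_k+1)-\sum_{\ell=1}^{\varrho}\boldsymbol{\sigma}(t-i_\ell+2)$, and $\boldsymbol{x}(\mathrm{ro}(T))=-\boldsymbol{\sigma}(1)+\boldsymbol{x}(T)\,\overline{\mathbf{U}}(t)\,\overline{\mathbf{T}}(t)$. (iv) If $\{1,t\}\cap A=\{t\}$ (so $j_\varrho=t$), then $\mathfrak{q}(T)=2\varrho-1$, $\boldsymbol{x}(T)=\sum_{k=1}^{\varrho-1}\boldsymbol{\sigma}(j_k+1)-\sum_{\ell=1}^{\varrho}\boldsymbol{\sigma}(i_\ell)$;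 moreover $\mathfrak{q}(\mathrm{ro}(T))=2\varrho-1$, $\boldsymbol{x}(\mathrm{ro}(T))=\sum_{k=1}^{\varrho-1}\boldsymbol{\sigma}(t-j_k+1)-\sum_{\ell=1}^{\varrho}\boldsymbol{\sigma}(t-i_\ell+2)$, and $\boldsymbol{x}(\mathrm{ro}(T))=\boldsymbol{x}(T)\,\overline{\mathbf{U}}(t)\,\overline{\mathbf{T}}(t)$.
   Context: Vectors are row vectors in $\mathbb{R}^t$; $\boldsymbol{\sigma}(e)$ is the $e$-th standard unit vector, $\mathrm{T}^{(+)}=(1,\ldots,1)$. For $S\subseteq E_t$, ${}_{-S}\mathrm{T}^{(+)}$ denotes the vector with entries $-1$ on $S$ and $1$ elsewhere. Define $R^0:=\mathrm{T}^{(+)}$ and $R^s:={}_{-[s]}\mathrm{T}^{(+)}$ for $1\le s\le t-1$, where $[s]=\{1,\ldots,s\}$ (these form the first half of a symmetric cycle $R^0,\ldots,R^{2t-1}$ in the hypercube graph on $\{1,-1\}^t$, with $R^{t+k}=-R^k$). The vectors $R^0,\ldots,R^{t-1}$ form a basis of $\mathbb{R}^t$; for $T\in\{1,-1\}^t$, $\boldsymbol{x}(T)=(x_1,\ldots,x_t)$ denotes the unique vector (it lies in $\{-1,0,1\}^t$) with $T=\sum_{i=1}^t x_iR^{i-1}$, and $\mathfrak{q}(T)$ denotes the number of nonzero entries of $\boldsymbol{x}(T)$ (equivalently the cardinality of the unique inclusion-minimal subset of $\{R^0,\ldots,R^{2t-1}\}$ summing to $T$). $\overline{\mathbf{U}}(t)$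 is the $t\times t$ backward identity matrix, with $(i,j)$ entry $\delta_{i+j,t+1}$; $\overline{\mathbf{T}}(t)$ is the $t\times t$ forward shift matrix, with $(i,j)$ entry $\delta_{j-i,1}$. The relabeled opposite of $T$ is $\mathrm{ro}(T):=-T\,\overline{\mathbf{U}}(t)$, i.e. $\mathrm{ro}(T)(e)=-T(t-e+1)$. *)

theory Defs
  imports Complex_Main "HOL-Library.Function_Algebras"
begin

text \<open>Vectors in R^t are modelled as functions nat \<Rightarrow> real, indexed by
  E_t = {1..t}, with value 0 outside {1..t}.  Matrices are functions nat \<Rightarrow> nat \<Rightarrow> real.\<close>

definition vecs :: "nat \<Rightarrow> (nat \<Rightarrow> real) set" where
  "vecs t = {v. \<forall>i. i \<notin> {1..t} \<longrightarrow> v i = 0}"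

definition unitv :: "nat \<Rightarrow> nat \<Rightarrow> real" where
  "unitv e = (\<lambda>i. if i = e then 1 else 0)"

definition minusT :: "nat \<Rightarrow> nat set \<Rightarrow> nat \<Rightarrow> real" where
  "minusT t S = (\<lambda>e. if e \<in> {1..t} then (if e \<in> S then -1 else 1) else 0)"

definition Rvec :: "nat \<Rightarrow> nat \<Rightarrow> nat \<Rightarrow> real" where
  "Rvec t s = minusT t {1..s}"

definition xvec :: "nat \<Rightarrow> (nat \<Rightarrow> real) \<Rightarrow> nat \<Rightarrow> real" where
  "xvec t T = (THE x. x \<in> vecs t \<and> T = (\<Sum>i\<in>{1..t}. (\<lambda>e. x i * Rvec t (i - 1) e)))"

definition qnum :: "nat \<Rightarrow> (nat \<Rightarrow> real) \<Rightarrow> nat" where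
  "qnum t T = card {i \<in> {1..t}. xvec t T i \<noteq> 0}"

definition vecmat :: "nat \<Rightarrow> (nat \<Rightarrow> real) \<Rightarrow> (nat \<Rightarrow> nat \<Rightarrow> real) \<Rightarrow> nat \<Rightarrow> real" where
  "vecmat t v M = (\<lambda>j. if j \<in> {1..t} then (\<Sum>i\<in>{1..t}. v i * M i j) else 0)"

definition Ubar :: "nat \<Rightarrow> nat \<Rightarrow> nat \<Rightarrow> real" where
  "Ubar t i j = (if i + j = t + 1 then 1 else 0)"

definition Tbar :: "nat \<Rightarrow> nat \<Rightarrow> nat \<Rightarrow> real" where
  "Tbar t i j = (if int j - int i = 1 then 1 else 0)"

definition ro :: "nat \<Rightarrow> (nat \<Rightarrow> real) \<Rightarrow> nat \<Rightarrow> real" where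
  "ro t T = vecmat t (- T) (Ubar t)"

end

theory Submission
  imports Defs
begin


lemma sum_app: "(\<Sum>k\<in>K. f k) (x::'b) = (\<Sum>k\<in>K. f k x)"
  for f :: "'a \<Rightarrow> 'b \<Rightarrow> real"
  by (induction K rule: infinite_finite_induct) auto

definition lin :: "nat \<Rightarrow> (nat \<Rightarrow> real) \<Rightarrow> nat \<Rightarrow> real" where
  "lin t x = (\<Sum>i\<in>{1..t}. (\<lambda>e. x i * Rvec t (i - 1) e))"

lemma lin_apply: "lin t x e = (\<Sum>i\<in>{1..t}. x i * Rvec t (i - 1) e)"
  by (simp add: lin_def sum_app)

lemma Rvec_apply: "Rvec t s e = (if e \<in> {1..t} then (if e \<le> s then -1 else 1) else 0)"
  by (auto simp: Rvec_def minusT_def)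

lemma lin_inj0:
  assumes c: "c \<in> vecs t" and z: "\<And>e. lin t c e = 0" and t1: "1 \<le> t"
  shows "c = (\<lambda>_. 0)"
proof -
  have diff: "lin t c e - lin t c (e+1) = -2 * c (e+1)" if "1 \<le> e" "e < t" for e
  proof -
    have "lin t c e - lin t c (e+1) = (\<Sum>i\<in>{1..t}. c i * (Rvec t (i-1) e - Rvec t (i-1) (e+1)))"
      by (simp add: lin_apply sum_subtractf[symmetric] algebra_simps)
    also have "... = (\<Sum>i\<in>{1..t}. if i = e+1 then -2 * c i else 0)"
      using that by (intro sum.cong) (auto simp: Rvec_apply)
    also have "... = -2 * c (e+1)" using that by simp
    finally show ?thesis .
  qed
  have hi: "c n = 0" if "2 \<le> n" "n \<le> t" for n
    using diff[of "n-1"] z that by simp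
  have "lin t c 1 = (\<Sum>i\<in>{1..t}. if i = 1 then c i else 0)"
    unfolding lin_apply using hi by (intro sum.cong) (auto simp: Rvec_apply)
  then have "c 1 = 0" using z t1 by simp
  then show ?thesis using hi c unfolding vecs_def
    by (auto simp: fun_eq_iff) (metis One_nat_def Suc_1 Suc_le_eq le_neq_implies_less not_less_eq_eq)
qed

lemma xvec_eq:
  assumes "x \<in> vecs t" "T = lin t x" "1 \<le> t"
  shows "xvec t T = x"
proof -
  have "xvec t T = (THE x. x \<in> vecs t \<and> T = lin t x)"
    unfolding xvec_def lin_def ..
  also have "... = x"
  proof (rule the_equality)
    show "x \<in> vecs t \<and> T = lin t x" using assms by simp
  next
    fix y assume y: "y \<in> vecs t \<and> T = lin t y"
    have "y - x \<in> vecs t" using y assms(1) by (auto simp: vecs_def)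
    moreover have "lin t (y - x) e = 0" for e
    proof -
      have "lin t (y - x) e = lin t y e - lin t x e"
        by (simp add: lin_apply sum_subtractf[symmetric] algebra_simps)
      then show ?thesis using y assms(2) by simp
    qed
    ultimately have "y - x = (\<lambda>_. 0)" using lin_inj0 assms(3) by blast
    then show "y = x" by (auto simp: fun_eq_iff)
  qed
  finally show ?thesis .
qed

definition vx :: "real \<Rightarrow> nat set \<Rightarrow> (nat \<Rightarrow> nat) \<Rightarrow> nat set \<Rightarrow> (nat \<Rightarrow> nat) \<Rightarrow> nat \<Rightarrow> real" where
  "vx c K f L g = (\<lambda>n. c * unitv 1 n + (\<Sum>k\<in>K. unitv (f k) n) - (\<Sum>l\<in>L. unitv (g l) n))"

lemma usum: "finite K \<Longrightarrow> inj_on f K \<Longrightarrow> (\<Sum>k\<in>K. unitv (f k) n) = (if n \<in> f ` K then 1 else 0)"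
proof -
  assume fK: "finite K" and "inj_on f K"
  then have "(\<Sum>k\<in>K. unitv (f k) n) = (\<Sum>m\<in>f ` K. unitv m n)"
    by (simp add: sum.reindex)
  also have "... = (\<Sum>m\<in>f ` K. if m = n then 1 else 0)"
    by (intro sum.cong) (auto simp: unitv_def)
  also have "... = (if n \<in> f ` K then 1 else 0)"
    using fK by (auto simp: sum.delta)
  finally show ?thesis .
qed

lemma sdm:
  assumes "finite S" "\<And>i. i \<in> S \<Longrightarrow> P i = (i = a)"
  shows "(\<Sum>i\<in>S. (f i :: real) * (if P i then 1 else 0)) = (if a \<in> S then f a else 0)"
proof -
  have "(\<Sum>i\<in>S. f i * (if P i then 1 else 0)) = (\<Sum>i\<in>S. if i = a then f i else 0)"
    using assms(2) by (intro sum.cong) auto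
  then show ?thesis using assms(1) by (simp add: sum.delta')
qed

definition reflx :: "nat \<Rightarrow> (nat \<Rightarrow> real) \<Rightarrow> nat \<Rightarrow> real" where
  "reflx t x = (\<lambda>n. if n = 1 then - x 1 else if n \<in> {2..t} then x (t + 2 - n) else 0)"

lemma ro_lin:
  assumes t1: "1 \<le> t"
  shows "ro t (lin t x) = lin t (reflx t x)"
proof
  fix e
  show "ro t (lin t x) e = lin t (reflx t x) e"
  proof (cases "e \<in> {1..t}")
    case False
    then show ?thesis by (simp add: ro_def vecmat_def lin_apply Rvec_apply del: atLeastAtMost_iff)
  next
    case True
    have "ro t (lin t x) e = (\<Sum>i\<in>{1..t}. (- lin t x) i * (if i + e = t + 1 then 1 else 0))"
      unfolding ro_def vecmat_def Ubar_def using True by simp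
    also have "... = - lin t x (t + 1 - e)" using True by (subst sdm[where a="t + 1 - e"]) auto
    also have "... = - (\<Sum>n\<in>{1..t}. x n * Rvec t (n - 1) (t + 1 - e))"
      by (simp add: lin_apply)
    also have "... = - (x 1 * Rvec t 0 (t + 1 - e) + (\<Sum>n\<in>{2..t}. x n * Rvec t (n - 1) (t + 1 - e)))"
      using t1 by (simp add: sum.atLeast_Suc_atMost numeral_2_eq_2)
    also have "... = - x 1 + (\<Sum>n\<in>{2..t}. x n * Rvec t (t + 1 - n) e)"
      using True by (auto simp: Rvec_apply sum_negf[symmetric] intro!: sum.cong)
    also have "(\<Sum>n\<in>{2..t}. x n * Rvec t (t + 1 - n) e) = (\<Sum>n\<in>{2..t}. reflx t x n * Rvec t (n - 1) e)"
      by (rule sum.reindex_bij_witness[where i="\<lambda>n. t + 2 - n" and j="\<lambda>n. t + 2 - n"])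
         (auto simp: reflx_def)
    also have "- x 1 + (\<Sum>n\<in>{2..t}. reflx t x n * Rvec t (n - 1) e) = lin t (reflx t x) e"
      using t1 True by (simp add: lin_apply sum.atLeast_Suc_atMost numeral_2_eq_2 reflx_def Rvec_apply)
    finally show ?thesis .
  qed
qed

lemma VV: "vecmat t (vecmat t x (Ubar t)) (Tbar t) = (\<lambda>n. if n \<in> {2..t} then x (t + 2 - n) else 0)"
proof
  fix n
  show "vecmat t (vecmat t x (Ubar t)) (Tbar t) n = (if n \<in> {2..t} then x (t + 2 - n) else 0)"
  proof (cases "n \<in> {2..t}")
    case True
    have ii: "(int n - int i = 1) = (i = n - 1)" for i using True by auto
    have "vecmat t (vecmat t x (Ubar t)) (Tbar t) n = (\<Sum>i\<in>{1..t}. vecmat t x (Ubar t) i * (if int n - int i = 1 then 1 else 0))"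
      unfolding vecmat_def [of t "vecmat t x (Ubar t)"] Tbar_def using True by simp
    also have "... = vecmat t x (Ubar t) (n - 1)" using True by (subst sdm[where a="n - 1"]) auto
    also have "... = (\<Sum>i\<in>{1..t}. x i * (if i + (n - 1) = t + 1 then 1 else 0))"
      unfolding vecmat_def Ubar_def using True by auto
    also have "... = x (t + 2 - n)" using True by (subst sdm[where a="t + 2 - n"]) auto
    finally show ?thesis using True by simp
  next
    case False
    then have "n \<notin> {1..t} \<or> n = 1" by auto
    then show ?thesis using False
      by (auto simp: vecmat_def Tbar_def intro!: sum.neutral)
  qed
qed

lemma vx_apply:
  assumes "finite K" "finite L" "inj_on f K" "inj_on g L"
  shows "vx c K f L g n = c * (if n = 1 then 1 else 0) + (if n \<in> f ` K then 1 else 0) - (if n \<in> g ` L then 1 else 0)"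
  unfolding vx_def using assms by (simp only: usum) (simp add: unitv_def)

lemma vx_vecs:
  assumes "finite K" "finite L" "inj_on f K" "inj_on g L"
    "f ` K \<subseteq> {2..t}" "g ` L \<subseteq> {2..t}" "1 \<le> t"
  shows "vx c K f L g \<in> vecs t"
  unfolding vecs_def using assms by (auto simp: vx_apply)

lemma vx_card:
  assumes "finite K" "finite L" "inj_on f K" "inj_on g L"
    "f ` K \<subseteq> {2..t}" "g ` L \<subseteq> {2..t}" "1 \<le> t" "f ` K \<inter> g ` L = {}"
  shows "card {n\<in>{1..t}. vx c K f L g n \<noteq> 0} = card K + card L + (if c = 0 then 0 else 1)"
proof -
  have S: "{n\<in>{1..t}. vx c K f L g n \<noteq> 0} = (if c = 0 then (f ` K \<union> g ` L) else insert 1 (f ` K \<union> g ` L))"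
    using assms by (auto simp: vx_apply)
  have C: "card (f ` K \<union> g ` L) = card K + card L"
    using assms by (simp add: card_Un_disjoint card_image)
  have N: "1 \<notin> f ` K \<union> g ` L" using assms by auto
  have F: "finite (f ` K \<union> g ` L)" using assms by simp
  show ?thesis unfolding S using C N F by (cases "c = 0") auto
qed

lemma G_refl:
  fixes f g :: "nat \<Rightarrow> nat" and t :: nat
  assumes "finite K" "finite L" "inj_on f K" "inj_on g L"
    "f ` K \<subseteq> {2..t}" "g ` L \<subseteq> {2..t}" "1 \<le> t" "f ` K \<inter> g ` L = {}"
  shows "inj_on (\<lambda>k. t + 2 - f k) K" "inj_on (\<lambda>k. t + 2 - g k) L"
    "(\<lambda>k. t + 2 - f k) ` K \<subseteq> {2..t}" "(\<lambda>k. t + 2 - g k) ` L \<subseteq> {2..t}"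
    "(\<lambda>k. t + 2 - f k) ` K \<inter> (\<lambda>k. t + 2 - g k) ` L = {}"
proof -
  show "inj_on (\<lambda>k. t + 2 - f k) K"
  proof (rule inj_onI)
    fix x y assume "x \<in> K" "y \<in> K" "t + 2 - f x = t + 2 - f y"
    moreover have "f x \<le> t" "f y \<le> t" using assms(5) \<open>x \<in> K\<close> \<open>y \<in> K\<close> by auto
    ultimately have "f x = f y" by arith
    then show "x = y" using assms(3) \<open>x \<in> _\<close> \<open>y \<in> _\<close> by (meson inj_onD)
  qed
  show "inj_on (\<lambda>k. t + 2 - g k) L"
  proof (rule inj_onI)
    fix x y assume "x \<in> L" "y \<in> L" "t + 2 - g x = t + 2 - g y"
    moreover have "g x \<le> t" "g y \<le> t" using assms(6) \<open>x \<in> L\<close> \<open>y \<in> L\<close> by auto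
    ultimately have "g x = g y" by arith
    then show "x = y" using assms(4) \<open>x \<in> _\<close> \<open>y \<in> _\<close> by (meson inj_onD)
  qed
  show "(\<lambda>k. t + 2 - f k) ` K \<subseteq> {2..t}" "(\<lambda>k. t + 2 - g k) ` L \<subseteq> {2..t}"
    using assms(5,6) by (auto simp: subset_eq)
  show "(\<lambda>k. t + 2 - f k) ` K \<inter> (\<lambda>k. t + 2 - g k) ` L = {}"
  proof (rule ccontr)
    assume "\<not> ?thesis"
    then obtain k l where kl: "k \<in> K" "l \<in> L" "t + 2 - f k = t + 2 - g l" by auto
    moreover have "f k \<le> t" "g l \<le> t" using assms(5,6) kl by auto
    ultimately have "f k = g l" by arith
    then show False using kl assms(8) by blast
  qed
qed

lemma refl_vx:
  assumes "finite K" "finite L" "inj_on f K" "inj_on g L"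
    "f ` K \<subseteq> {2..t}" "g ` L \<subseteq> {2..t}" "1 \<le> t" "f ` K \<inter> g ` L = {}"
  shows "reflx t (vx c K f L g) = vx (-c) K (\<lambda>k. t + 2 - f k) L (\<lambda>k. t + 2 - g k)"
proof
  fix n
  note G = G_refl[OF assms]
  have e1: "(t + 2 - n \<in> f ` K) = (n \<in> (\<lambda>k. t + 2 - f k) ` K)" if "n \<in> {2..t}"
    using assms(5) that by (auto simp: image_iff) force+
  have e2: "(t + 2 - n \<in> g ` L) = (n \<in> (\<lambda>k. t + 2 - g k) ` L)" if "n \<in> {2..t}"
    using assms(6) that by (auto simp: image_iff) force+
  show "reflx t (vx c K f L g) n = vx (-c) K (\<lambda>k. t + 2 - f k) L (\<lambda>k. t + 2 - g k) n"
  proof -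
    have n1: "1 \<notin> f ` K" "1 \<notin> g ` L" "1 \<notin> (\<lambda>k. t + 2 - f k) ` K" "1 \<notin> (\<lambda>k. t + 2 - g k) ` L"
      using assms(5,6) G(3,4) by auto
    consider "n = 1" | "n \<in> {2..t}" | "n \<noteq> 1" "n \<notin> {2..t}" by blast
    then show ?thesis
    proof cases
      case 1
      then show ?thesis unfolding reflx_def vx_apply[OF assms(1-4)] vx_apply[OF assms(1,2) G(1,2)]
        using n1 by simp
    next
      case 2
      then have "t + 2 - n \<noteq> 1" "n \<noteq> 1" by auto
      then show ?thesis unfolding reflx_def vx_apply[OF assms(1-4)] vx_apply[OF assms(1,2) G(1,2)]
        using 2 e1 e2 by simp
    next
      case 3
      then have "n \<notin> (\<lambda>k. t + 2 - f k) ` K" "n \<notin> (\<lambda>k. t + 2 - g k) ` L"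
        using G(3,4) by blast+
      then show ?thesis unfolding reflx_def vx_apply[OF assms(1,2) G(1,2)]
        using 3 by auto
    qed
  qed
qed

lemma gen:
  assumes fin: "finite K" "finite L" and inj: "inj_on f K" "inj_on g L"
    and rng: "f ` K \<subseteq> {2..t}" "g ` L \<subseteq> {2..t}" and t1: "1 \<le> t" and dj: "f ` K \<inter> g ` L = {}"
    and T: "T = lin t (vx c K f L g)"
  shows "xvec t T = vx c K f L g"
   "qnum t T = card K + card L + (if c = 0 then 0 else 1)"
   "xvec t (ro t T) = vx (-c) K (\<lambda>k. t + 2 - f k) L (\<lambda>k. t + 2 - g k)"
   "qnum t (ro t T) = card K + card L + (if c = 0 then 0 else 1)"
   "xvec t (ro t T) = (\<lambda>n. - c * unitv 1 n) + vecmat t (vecmat t (xvec t T) (Ubar t)) (Tbar t)"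
proof -
  note A = fin inj rng t1 dj
  note G = G_refl[OF A]
  show x1: "xvec t T = vx c K f L g" by (rule xvec_eq[OF vx_vecs[OF A(1-7)] T t1])
  show "qnum t T = card K + card L + (if c = 0 then 0 else 1)"
    unfolding qnum_def x1 using vx_card[OF A] .
  have "ro t T = lin t (vx (-c) K (\<lambda>k. t + 2 - f k) L (\<lambda>k. t + 2 - g k))"
    unfolding T ro_lin[OF t1] refl_vx[OF A] ..
  then show x2: "xvec t (ro t T) = vx (-c) K (\<lambda>k. t + 2 - f k) L (\<lambda>k. t + 2 - g k)"
    by (rule xvec_eq[OF vx_vecs[OF fin G(1-4) t1] _ t1])
  show "qnum t (ro t T) = card K + card L + (if c = 0 then 0 else 1)"
    unfolding qnum_def x2 using vx_card[OF fin G(1-4) t1 G(5)] by simp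
  show "xvec t (ro t T) = (\<lambda>n. - c * unitv 1 n) + vecmat t (vecmat t (xvec t T) (Ubar t)) (Tbar t)"
  proof -
    have "1 \<notin> f ` K" "1 \<notin> g ` L" using rng by auto
    then have v1: "vx c K f L g 1 = c" by (simp add: vx_apply[OF fin inj])
    show ?thesis unfolding x2 x1 VV refl_vx[OF A, symmetric]
    proof
      fix n show "reflx t (vx c K f L g) n = ((\<lambda>n. - c * unitv 1 n) + (\<lambda>n. if n \<in> {2..t} then vx c K f L g (t + 2 - n) else 0)) n"
        unfolding reflx_def plus_fun_apply unitv_def using v1 by simp
    qed
  qed
qed

lemma vx_lin:
  assumes fin: "finite K" "finite L" and inj: "inj_on f K" "inj_on g L"
    and rng: "f ` K \<subseteq> {2..t}" "g ` L \<subseteq> {2..t}" and t1: "1 \<le> t"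
  shows "lin t (vx c K f L g) e = c * Rvec t 0 e + (\<Sum>k\<in>K. Rvec t (f k - 1) e) - (\<Sum>l\<in>L. Rvec t (g l - 1) e)"
proof -
  have "lin t (vx c K f L g) e = (\<Sum>n\<in>{1..t}. c * ((if n = 1 then 1 else 0) * Rvec t (n - 1) e))
      + (\<Sum>n\<in>{1..t}. (if n \<in> f ` K then Rvec t (n - 1) e else 0))
      - (\<Sum>n\<in>{1..t}. (if n \<in> g ` L then Rvec t (n - 1) e else 0))"
    unfolding lin_apply vx_apply[OF fin inj] sum_subtractf[symmetric] sum.distrib[symmetric]
    by (intro sum.cong refl) (simp add: algebra_simps)
  also have "(\<Sum>n\<in>{1..t}. c * ((if n = 1 then 1 else 0) * Rvec t (n - 1) e)) = c * Rvec t 0 e"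
  proof -
    have "(\<Sum>n\<in>{1..t}. c * ((if n = 1 then 1 else 0) * Rvec t (n - 1) e)) = (\<Sum>n\<in>{1..t}. if n = 1 then c * Rvec t (n - 1) e else 0)"
      by (intro sum.cong) auto
    then show ?thesis using t1 by (simp add: sum.delta)
  qed
  also have "(\<Sum>n\<in>{1..t}. (if n \<in> f ` K then Rvec t (n - 1) e else 0)) = (\<Sum>n\<in>f ` K. Rvec t (n - 1) e)"
  proof -
    have "{1..t} \<inter> f ` K = f ` K" using rng by auto
    then show ?thesis by (subst sum.inter_restrict[symmetric]) auto
  qed
  also have "... = (\<Sum>k\<in>K. Rvec t (f k - 1) e)" using inj by (simp add: sum.reindex)
  also have "(\<Sum>n\<in>{1..t}. (if n \<in> g ` L then Rvec t (n - 1) e else 0)) = (\<Sum>n\<in>g ` L. Rvec t (n - 1) e)"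
  proof -
    have "{1..t} \<inter> g ` L = g ` L" using rng by auto
    then show ?thesis by (subst sum.inter_restrict[symmetric]) auto
  qed
  also have "... = (\<Sum>l\<in>L. Rvec t (g l - 1) e)" using inj by (simp add: sum.reindex)
  finally show ?thesis .
qed

lemma rvsum:
  assumes "e \<in> {1..t}"
  shows "(\<Sum>k\<in>K. Rvec t (h k) e) = real (card K) - 2 * (\<Sum>k\<in>K. if e \<le> h k then 1 else 0)"
proof -
  have "(\<Sum>k\<in>K. Rvec t (h k) e) = (\<Sum>k\<in>K. 1 - 2 * (if e \<le> h k then 1 else 0))"
    using assms by (intro sum.cong) (auto simp: Rvec_apply)
  then show ?thesis by (simp add: sum_subtractf sum_distrib_left)
qed

lemma split1: "1 \<le> (r::nat) \<Longrightarrow> sum h {1..r} = (h 1 :: real) + sum h {2..r}"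
  by (simp add: sum.atLeast_Suc_atMost numeral_2_eq_2)

lemma splitlast: "1 \<le> (r::nat) \<Longrightarrow> sum h {1..r} = sum h {1..r - 1} + (h r :: real)"
  by (cases r) auto



theorem proposition2p2:
  fixes t \<rho> :: nat and A :: "nat set" and i j :: "nat \<Rightarrow> nat"
  assumes t3: "t \<ge> 3"
    and AE: "A \<subseteq> {1..t}"
    and Ane: "A \<noteq> {}"
    and Aunion: "A = (\<Union>k\<in>{1..\<rho>}. {i k..j k})"
    and ij: "\<And>k. k \<in> {1..\<rho>} \<Longrightarrow> i k \<le> j k"
    and gap: "\<And>k. 1 \<le> k \<Longrightarrow> k \<le> \<rho> - 1 \<Longrightarrow> j k + 2 \<le> i (k + 1)"
  defines "T \<equiv> minusT t A"
  shows
   "({1, t} \<inter> A = {1} \<longrightarrow>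
       qnum t T = 2 * \<rho> - 1
     \<and> xvec t T = (\<Sum>k=1..\<rho>. unitv (j k + 1)) - (\<Sum>l=2..\<rho>. unitv (i l))
     \<and> qnum t (ro t T) = 2 * \<rho> - 1
     \<and> xvec t (ro t T) = (\<Sum>k=1..\<rho>. unitv (t - j k + 1)) - (\<Sum>l=2..\<rho>. unitv (t - i l + 2))
     \<and> xvec t (ro t T) = vecmat t (vecmat t (xvec t T) (Ubar t)) (Tbar t))
  \<and> ({1, t} \<inter> A = {1, t} \<longrightarrow>
       qnum t T = 2 * \<rho> - 1
     \<and> xvec t T = - unitv 1 + (\<Sum>k=1..\<rho>-1. unitv (j k + 1)) - (\<Sum>l=2..\<rho>. unitv (i l))
     \<and> qnum t (ro t T) = 2 * \<rho> - 1
     \<and> xvec t (ro t T) = unitv 1 + (\<Sum>k=1..\<rho>-1. unitv (t - j k + 1)) - (\<Sum>l=2..\<rho>. unitv (t - i l + 2))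
     \<and> xvec t (ro t T) = unitv 1 + vecmat t (vecmat t (xvec t T) (Ubar t)) (Tbar t))
  \<and> ({1, t} \<inter> A = {} \<longrightarrow>
       qnum t T = 2 * \<rho> + 1
     \<and> xvec t T = unitv 1 + (\<Sum>k=1..\<rho>. unitv (j k + 1)) - (\<Sum>l=1..\<rho>. unitv (i l))
     \<and> qnum t (ro t T) = 2 * \<rho> + 1
     \<and> xvec t (ro t T) = - unitv 1 + (\<Sum>k=1..\<rho>. unitv (t - j k + 1)) - (\<Sum>l=1..\<rho>. unitv (t - i l + 2))
     \<and> xvec t (ro t T) = - unitv 1 + vecmat t (vecmat t (xvec t T) (Ubar t)) (Tbar t))
  \<and> ({1, t} \<inter> A = {t} \<longrightarrow>
       qnum t T = 2 * \<rho> - 1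
     \<and> xvec t T = (\<Sum>k=1..\<rho>-1. unitv (j k + 1)) - (\<Sum>l=1..\<rho>. unitv (i l))
     \<and> qnum t (ro t T) = 2 * \<rho> - 1
     \<and> xvec t (ro t T) = (\<Sum>k=1..\<rho>-1. unitv (t - j k + 1)) - (\<Sum>l=1..\<rho>. unitv (t - i l + 2))
     \<and> xvec t (ro t T) = vecmat t (vecmat t (xvec t T) (Ubar t)) (Tbar t))"
proof -
  have t1: "1 \<le> t" using t3 by simp
  have rho: "1 \<le> \<rho>"
  proof (rule ccontr)
    assume "\<not> 1 \<le> \<rho>" then have "\<rho> = 0" by simp
    then show False using Ane Aunion by simp
  qed
  have inA: "i k \<in> A" "j k \<in> A" if "k \<in> {1..\<rho>}" for k
    using Aunion ij[OF that] that by auto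
  have ib: "1 \<le> i k" "j k \<le> t" "i k \<le> t" "1 \<le> j k" if "k \<in> {1..\<rho>}" for k
    using inA[OF that] AE ij[OF that] by auto
  have mono0: "\<forall>k. 1 \<le> k \<longrightarrow> k < k' \<longrightarrow> k' \<le> \<rho> \<longrightarrow> j k + 2 \<le> i k'" for k'
  proof (induction k')
    case 0 show ?case by simp
  next
    case (Suc m)
    show ?case
    proof (intro allI impI)
      fix k assume k: "1 \<le> k" "k < Suc m" "Suc m \<le> \<rho>"
      have g: "j m + 2 \<le> i (m + 1)" using gap[of m] k by simp
      show "j k + 2 \<le> i (Suc m)"
      proof (cases "k = m")
        case True then show ?thesis using g by simp
      next
        case False
        then have "k < m" using k by simp
        then have "j k + 2 \<le> i m" using Suc.IH k by simp
        moreover have "i m \<le> j m" using ij[of m] k \<open>k < m\<close> by simp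
        ultimately show ?thesis using g by simp
      qed
    qed
  qed
  have mono: "j k + 2 \<le> i k'" if "1 \<le> k" "k < k'" "k' \<le> \<rho>" for k k'
    using mono0[of k'] that by blast
  have cnt: "(\<Sum>k\<in>{1..\<rho>}. if e \<le> j k then 1 else 0::real) - (\<Sum>k\<in>{1..\<rho>}. if e < i k then 1 else 0)
      = (if e \<in> A then 1 else 0)" for e
  proof -
    have "(\<Sum>k\<in>{1..\<rho>}. if e \<le> j k then 1 else 0::real) - (\<Sum>k\<in>{1..\<rho>}. if e < i k then 1 else 0)
       = (\<Sum>k\<in>{1..\<rho>}. if i k \<le> e \<and> e \<le> j k then 1 else 0)"
      unfolding sum_subtractf[symmetric] using ij by (intro sum.cong refl) force
    also have "... = (if e \<in> A then 1 else 0)"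
    proof (cases "e \<in> A")
      case True
      then obtain m where m: "m \<in> {1..\<rho>}" "i m \<le> e" "e \<le> j m" using Aunion by auto
      have "(\<Sum>k\<in>{1..\<rho>}. if i k \<le> e \<and> e \<le> j k then 1 else 0::real) = (\<Sum>k\<in>{1..\<rho>}. if k = m then 1 else 0)"
      proof (intro sum.cong refl)
        fix k assume k: "k \<in> {1..\<rho>}"
        show "(if i k \<le> e \<and> e \<le> j k then 1 else 0::real) = (if k = m then 1 else 0)"
        proof (cases k m rule: linorder_cases)
          case less then show ?thesis using mono[of k m] k m by auto
        next
          case equal then show ?thesis using m by auto
        next
          case greater then show ?thesis using mono[of m k] k m by auto
        qed
      qed
      then show ?thesis using m True by simp
    next
      case False
      then show ?thesis using Aunion by (auto intro!: sum.neutral)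
    qed
    finally show ?thesis .
  qed
  have injJ: "inj_on (\<lambda>k. j k + 1) K" if "K \<subseteq> {1..\<rho>}" for K
  proof (rule inj_onI)
    fix x y assume xy: "x \<in> K" "y \<in> K" "j x + 1 = j y + 1"
    show "x = y"
    proof (cases x y rule: linorder_cases)
      case less
      have "x \<in> {1..\<rho>}" "y \<in> {1..\<rho>}" using xy that by auto
      then have "j x + 2 \<le> i y" "i y \<le> j y" using mono[of x y] ij[of y] less by auto
      then show ?thesis using xy by linarith
    next
      case greater
      have "x \<in> {1..\<rho>}" "y \<in> {1..\<rho>}" using xy that by auto
      then have "j y + 2 \<le> i x" "i x \<le> j x" using mono[of y x] ij[of x] greater by auto
      then show ?thesis using xy by linarith
    qed
  qed
  have injI: "inj_on i L" if "L \<subseteq> {1..\<rho>}" for L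
  proof (rule inj_onI)
    fix x y assume xy: "x \<in> L" "y \<in> L" "i x = i y"
    show "x = y"
    proof (cases x y rule: linorder_cases)
      case less
      have "x \<in> {1..\<rho>}" "y \<in> {1..\<rho>}" using xy that by auto
      then have "j x + 2 \<le> i y" "i x \<le> j x" using mono[of x y] ij[of x] less by auto
      then show ?thesis using xy by linarith
    next
      case greater
      have "x \<in> {1..\<rho>}" "y \<in> {1..\<rho>}" using xy that by auto
      then have "j y + 2 \<le> i x" "i y \<le> j y" using mono[of y x] ij[of y] greater by auto
      then show ?thesis using xy by linarith
    qed
  qed
  have disj: "(\<lambda>k. j k + 1) ` K \<inter> i ` L = {}" if "K \<subseteq> {1..\<rho>}" "L \<subseteq> {1..\<rho>}" for K L
  proof (rule ccontr)
    assume "\<not> ?thesis"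
    then obtain k l where kl: "k \<in> K" "l \<in> L" "j k + 1 = i l" by auto
    then have k: "k \<in> {1..\<rho>}" and l: "l \<in> {1..\<rho>}" using that by auto
    show False
    proof (cases l k rule: linorder_cases)
      case less
      then have "j l + 2 \<le> i k" "i l \<le> j l" "i k \<le> j k" using mono[of l k] ij[of l] ij[of k] k l by auto
      then show ?thesis using kl by linarith
    next
      case equal then show ?thesis using ij[of l] k l kl by simp
    next
      case greater
      then have "j k + 2 \<le> i l" using mono[of k l] k l by auto
      then show ?thesis using kl by linarith
    qed
  qed
  have Res: "xvec t T = vx c K (\<lambda>k. j k + 1) L i
   \<and> qnum t T = card K + card L + (if c = 0 then 0 else 1)
   \<and> xvec t (ro t T) = vx (-c) K (\<lambda>k. t + 2 - (j k + 1)) L (\<lambda>k. t + 2 - i k)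
   \<and> qnum t (ro t T) = card K + card L + (if c = 0 then 0 else 1)
   \<and> xvec t (ro t T) = (\<lambda>n. - c * unitv 1 n) + vecmat t (vecmat t (xvec t T) (Ubar t)) (Tbar t)"
    if K: "K \<subseteq> {1..\<rho>}" and L: "L \<subseteq> {1..\<rho>}" and Kt: "\<And>k. k \<in> K \<Longrightarrow> j k + 1 \<le> t"
      and L2: "\<And>l. l \<in> L \<Longrightarrow> 2 \<le> i l"
      and ar: "\<And>e. e \<in> {1..t} \<Longrightarrow> c + real (card K) - real (card L)
           - 2 * (\<Sum>k\<in>K. if e \<le> j k then 1 else 0) + 2 * (\<Sum>l\<in>L. if e < i l then 1 else 0)
           = (if e \<in> A then -1 else 1)"
    for c K L
  proof -
    have fin: "finite K" "finite L" using K L finite_subset by blast+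
    have rng: "(\<lambda>k. j k + 1) ` K \<subseteq> {2..t}" "i ` L \<subseteq> {2..t}"
      using K L Kt L2 ib by force+
    have TT: "T = lin t (vx c K (\<lambda>k. j k + 1) L i)"
    proof
      fix e
      show "T e = lin t (vx c K (\<lambda>k. j k + 1) L i) e"
      proof (cases "e \<in> {1..t}")
        case False
        then show ?thesis unfolding T_def vx_lin[OF fin injJ[OF K] injI[OF L] rng t1]
          by (simp add: minusT_def Rvec_apply del: atLeastAtMost_iff)
      next
        case True
        have "(\<Sum>l\<in>L. if e \<le> i l - 1 then 1 else 0) = (\<Sum>l\<in>L. if e < i l then 1 else (0::real))"
          using True by (intro sum.cong) auto
        then show ?thesis unfolding T_def vx_lin[OF fin injJ[OF K] injI[OF L] rng t1] rvsum[OF True]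
          using ar[OF True] True by (simp add: minusT_def Rvec_apply)
      qed
    qed
    note gen[OF fin injJ[OF K] injI[OF L] rng t1 disj[OF K L] TT]
    then show ?thesis by blast
  qed
  have sJ: "(\<Sum>k\<in>K. unitv (t - j k + 1)) = (\<Sum>k\<in>K. unitv (t + 2 - (j k + 1)))" if "K \<subseteq> {1..\<rho>}" for K
  proof (intro sum.cong refl)
    fix k assume "k \<in> K" then have "j k \<le> t" using that ib by auto
    then have "t - j k + 1 = t + 2 - (j k + 1)" by arith
    then show "unitv (t - j k + 1) = unitv (t + 2 - (j k + 1))" by simp
  qed
  have sI: "(\<Sum>k\<in>K. unitv (t - i k + 2)) = (\<Sum>k\<in>K. unitv (t + 2 - i k))" if "K \<subseteq> {1..\<rho>}" for K
  proof (intro sum.cong refl)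
    fix k assume "k \<in> K" then have "i k \<le> t" using that ib by auto
    then have "t - i k + 2 = t + 2 - i k" by arith
    then show "unitv (t - i k + 2) = unitv (t + 2 - i k)" by simp
  qed
  have i1: "i 1 = 1" if oA: "1 \<in> A"
  proof -
    obtain m where m: "m \<in> {1..\<rho>}" "i m \<le> 1" "1 \<le> j m" using oA Aunion by auto
    have "m = 1"
    proof (rule ccontr)
      assume "m \<noteq> 1" then have "j 1 + 2 \<le> i m" using mono[of 1 m] m by auto
      then show False using m by linarith
    qed
    then show ?thesis using m ib[OF m(1)] by simp
  qed
  have jr: "j \<rho> = t" if tA: "t \<in> A"
  proof -
    obtain m where m: "m \<in> {1..\<rho>}" "i m \<le> t" "t \<le> j m" using tA Aunion by auto
    have "m = \<rho>"
    proof (rule ccontr)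
      assume "m \<noteq> \<rho>" then have "j m + 2 \<le> i \<rho>" using mono[of m \<rho>] m by auto
      then show False using m ib[of \<rho>] rho by auto
    qed
    then show ?thesis using m ib[OF m(1)] by simp
  qed
  have Kt1: "j k + 1 \<le> t" if "t \<notin> A" "k \<in> {1..\<rho>}" for k
    using ib[OF that(2)] inA[OF that(2)] that(1) by (cases "j k = t") auto
  have Kt2: "j k + 1 \<le> t" if "k \<in> {1..\<rho> - 1}" for k
  proof -
    have "k + 1 \<in> {1..\<rho>}" "1 \<le> k" "k \<le> \<rho> - 1" using that rho by auto
    then show ?thesis using gap[of k] ib[of "k + 1"] by auto
  qed
  have L21: "2 \<le> i l" if "l \<in> {2..\<rho>}" for l
    using mono[of 1 l] that by auto
  have L22: "2 \<le> i l" if "1 \<notin> A" "l \<in> {1..\<rho>}" for l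
    using ib[OF that(2)] inA[OF that(2)] that(1) by (cases "i l = 1") auto
  have SIs: "(\<Sum>k\<in>{1..\<rho>}. if e < i k then 1 else 0::real) = (\<Sum>k\<in>{2..\<rho>}. if e < i k then 1 else 0)"
    if "1 \<in> A" "1 \<le> e" for e
    using split1[OF rho, of "\<lambda>k. if e < i k then 1 else 0"] i1[OF that(1)] that(2) by simp
  have SJs: "(\<Sum>k\<in>{1..\<rho>}. if e \<le> j k then 1 else 0::real) = (\<Sum>k\<in>{1..\<rho>-1}. if e \<le> j k then 1 else 0) + 1"
    if "t \<in> A" "e \<le> t" for e
    using splitlast[OF rho, of "\<lambda>k. if e \<le> j k then 1 else 0"] jr[OF that(1)] that(2) by simp
  have c1: "real (card {1..\<rho>}) = real \<rho>" "real (card {2..\<rho>}) = real \<rho> - 1"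
      "real (card {1..\<rho>-1}) = real \<rho> - 1"
  proof -
    have r: "real (\<rho> - 1) = real \<rho> - 1" using rho by (simp add: of_nat_diff)
    have "card {2..\<rho>} = \<rho> - 1" "card {1..\<rho>-1} = \<rho> - 1" "card {1..\<rho>} = \<rho>" by simp_all
    then show "real (card {1..\<rho>}) = real \<rho>" "real (card {2..\<rho>}) = real \<rho> - 1"
      "real (card {1..\<rho>-1}) = real \<rho> - 1" using r by simp_all
  qed
  have sJ1: "(\<Sum>k=1..\<rho>. unitv (t - j k + 1)) = (\<Sum>k=1..\<rho>. unitv (t + 2 - (j k + 1)))" by (rule sJ) simp
  have sJ2: "(\<Sum>k=1..\<rho>-1. unitv (t - j k + 1)) = (\<Sum>k=1..\<rho>-1. unitv (t + 2 - (j k + 1)))" by (rule sJ) auto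
  have sI1: "(\<Sum>k=1..\<rho>. unitv (t - i k + 2)) = (\<Sum>k=1..\<rho>. unitv (t + 2 - i k))" by (rule sI) simp
  have sI2: "(\<Sum>k=2..\<rho>. unitv (t - i k + 2)) = (\<Sum>k=2..\<rho>. unitv (t + 2 - i k))" by (rule sI) auto
  have case1: "{1, t} \<inter> A = {1} \<longrightarrow>
       qnum t T = 2 * \<rho> - 1
     \<and> xvec t T = (\<Sum>k=1..\<rho>. unitv (j k + 1)) - (\<Sum>l=2..\<rho>. unitv (i l))
     \<and> qnum t (ro t T) = 2 * \<rho> - 1
     \<and> xvec t (ro t T) = (\<Sum>k=1..\<rho>. unitv (t - j k + 1)) - (\<Sum>l=2..\<rho>. unitv (t - i l + 2))
     \<and> xvec t (ro t T) = vecmat t (vecmat t (xvec t T) (Ubar t)) (Tbar t)"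
  proof
    assume h: "{1, t} \<inter> A = {1}"
    have oA: "1 \<in> A" using h by blast
    have tA: "t \<notin> A"
    proof
      assume "t \<in> A" then have "t \<in> {1, t} \<inter> A" by simp
      then have "t \<in> {1}" using h by blast
      then show False using t3 by simp
    qed

    have ar: "0 + real (card {1..\<rho>}) - real (card {2..\<rho>})
           - 2 * (\<Sum>k\<in>{1..\<rho>}. if e \<le> j k then 1 else 0) + 2 * (\<Sum>l\<in>{2..\<rho>}. if e < i l then 1 else 0)
           = (if e \<in> A then -1 else 1)" if e: "e \<in> {1..t}" for e
    proof -
      have a: "(\<Sum>k\<in>{1..\<rho>}. if e < i k then 1 else 0::real) = (\<Sum>k\<in>{2..\<rho>}. if e < i k then 1 else 0)"
        using SIs[OF oA, of e] e by simp
      have b: "True" by simp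

      show ?thesis
      proof (cases "e \<in> A")
        case True
        then have "(\<Sum>k\<in>{1..\<rho>}. if e \<le> j k then 1 else 0::real) - (\<Sum>k\<in>{1..\<rho>}. if e < i k then 1 else 0) = 1"
          using cnt[of e] by simp
        then show ?thesis using True a b c1 by simp
      next
        case False
        then have "(\<Sum>k\<in>{1..\<rho>}. if e \<le> j k then 1 else 0::real) - (\<Sum>k\<in>{1..\<rho>}. if e < i k then 1 else 0) = 0"
          using cnt[of e] by simp
        then show ?thesis using False a b c1 by simp
      qed
    qed
    have R: "xvec t T = vx 0 {1..\<rho>} (\<lambda>k. j k + 1) {2..\<rho>} i
   \<and> qnum t T = card {1..\<rho>} + card {2..\<rho>} + (if (0::real) = 0 then 0 else 1)
   \<and> xvec t (ro t T) = vx (- 0) {1..\<rho>} (\<lambda>k. t + 2 - (j k + 1)) {2..\<rho>} (\<lambda>k. t + 2 - i k)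
   \<and> qnum t (ro t T) = card {1..\<rho>} + card {2..\<rho>} + (if (0::real) = 0 then 0 else 1)
   \<and> xvec t (ro t T) = (\<lambda>n. - 0 * unitv 1 n) + vecmat t (vecmat t (xvec t T) (Ubar t)) (Tbar t)"
      by (rule Res) (use Kt1[OF tA] L21 ar in auto)
    note R1 = R[THEN conjunct1] and R2 = R[THEN conjunct2, THEN conjunct1]
      and R3 = R[THEN conjunct2, THEN conjunct2, THEN conjunct1]
      and R4 = R[THEN conjunct2, THEN conjunct2, THEN conjunct2, THEN conjunct1]
      and R5 = R[THEN conjunct2, THEN conjunct2, THEN conjunct2, THEN conjunct2]
    have q: "card {1..\<rho>} + card {2..\<rho>} + (if (0::real) = 0 then 0 else 1) = 2 * \<rho> - 1"
      using rho by simp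
    show "qnum t T = 2 * \<rho> - 1
     \<and> xvec t T = (\<Sum>k=1..\<rho>. unitv (j k + 1)) - (\<Sum>l=2..\<rho>. unitv (i l))
     \<and> qnum t (ro t T) = 2 * \<rho> - 1
     \<and> xvec t (ro t T) = (\<Sum>k=1..\<rho>. unitv (t - j k + 1)) - (\<Sum>l=2..\<rho>. unitv (t - i l + 2))
     \<and> xvec t (ro t T) = vecmat t (vecmat t (xvec t T) (Ubar t)) (Tbar t)"
    proof (intro conjI)
      show "qnum t T = 2 * \<rho> - 1" using R2 q by simp
      show "qnum t (ro t T) = 2 * \<rho> - 1" using R4 q by simp
      show "xvec t T = (\<Sum>k=1..\<rho>. unitv (j k + 1)) - (\<Sum>l=2..\<rho>. unitv (i l))"
        unfolding R1 by (simp add: vx_def fun_eq_iff sum_app)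
      show "xvec t (ro t T) = (\<Sum>k=1..\<rho>. unitv (t - j k + 1)) - (\<Sum>l=2..\<rho>. unitv (t - i l + 2))"
        unfolding R3 sJ1 sI2 by (simp add: vx_def fun_eq_iff sum_app)
      show "xvec t (ro t T) = vecmat t (vecmat t (xvec t T) (Ubar t)) (Tbar t)"
        unfolding R5 by (simp add: fun_eq_iff)
    qed
  qed
  have case2: "{1, t} \<inter> A = {1, t} \<longrightarrow>
       qnum t T = 2 * \<rho> - 1
     \<and> xvec t T = - unitv 1 + (\<Sum>k=1..\<rho>-1. unitv (j k + 1)) - (\<Sum>l=2..\<rho>. unitv (i l))
     \<and> qnum t (ro t T) = 2 * \<rho> - 1
     \<and> xvec t (ro t T) = unitv 1 + (\<Sum>k=1..\<rho>-1. unitv (t - j k + 1)) - (\<Sum>l=2..\<rho>. unitv (t - i l + 2))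
     \<and> xvec t (ro t T) = unitv 1 + vecmat t (vecmat t (xvec t T) (Ubar t)) (Tbar t)"
  proof
    assume h: "{1, t} \<inter> A = {1, t}"
    have oA: "1 \<in> A" using h by blast
    have tA: "t \<in> A" using h by blast

    have ar: "(-1) + real (card {1..\<rho>-1}) - real (card {2..\<rho>})
           - 2 * (\<Sum>k\<in>{1..\<rho>-1}. if e \<le> j k then 1 else 0) + 2 * (\<Sum>l\<in>{2..\<rho>}. if e < i l then 1 else 0)
           = (if e \<in> A then -1 else 1)" if e: "e \<in> {1..t}" for e
    proof -
      have a: "(\<Sum>k\<in>{1..\<rho>}. if e < i k then 1 else 0::real) = (\<Sum>k\<in>{2..\<rho>}. if e < i k then 1 else 0)"
        using SIs[OF oA, of e] e by simp
      have b: "(\<Sum>k\<in>{1..\<rho>}. if e \<le> j k then 1 else 0::real) = (\<Sum>k\<in>{1..\<rho>-1}. if e \<le> j k then 1 else 0) + 1"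
        using SJs[OF tA, of e] e by simp

      show ?thesis
      proof (cases "e \<in> A")
        case True
        then have "(\<Sum>k\<in>{1..\<rho>}. if e \<le> j k then 1 else 0::real) - (\<Sum>k\<in>{1..\<rho>}. if e < i k then 1 else 0) = 1"
          using cnt[of e] by simp
        then show ?thesis using True a b c1 by simp
      next
        case False
        then have "(\<Sum>k\<in>{1..\<rho>}. if e \<le> j k then 1 else 0::real) - (\<Sum>k\<in>{1..\<rho>}. if e < i k then 1 else 0) = 0"
          using cnt[of e] by simp
        then show ?thesis using False a b c1 by simp
      qed
    qed
    have R: "xvec t T = vx (-1) {1..\<rho>-1} (\<lambda>k. j k + 1) {2..\<rho>} i
   \<and> qnum t T = card {1..\<rho>-1} + card {2..\<rho>} + (if ((-1)::real) = 0 then 0 else 1)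
   \<and> xvec t (ro t T) = vx (- (-1)) {1..\<rho>-1} (\<lambda>k. t + 2 - (j k + 1)) {2..\<rho>} (\<lambda>k. t + 2 - i k)
   \<and> qnum t (ro t T) = card {1..\<rho>-1} + card {2..\<rho>} + (if ((-1)::real) = 0 then 0 else 1)
   \<and> xvec t (ro t T) = (\<lambda>n. - (-1) * unitv 1 n) + vecmat t (vecmat t (xvec t T) (Ubar t)) (Tbar t)"
      by (rule Res) (use Kt2 L21 ar in auto)
    note R1 = R[THEN conjunct1] and R2 = R[THEN conjunct2, THEN conjunct1]
      and R3 = R[THEN conjunct2, THEN conjunct2, THEN conjunct1]
      and R4 = R[THEN conjunct2, THEN conjunct2, THEN conjunct2, THEN conjunct1]
      and R5 = R[THEN conjunct2, THEN conjunct2, THEN conjunct2, THEN conjunct2]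
    have q: "card {1..\<rho>-1} + card {2..\<rho>} + (if ((-1)::real) = 0 then 0 else 1) = 2 * \<rho> - 1"
      using rho by simp
    show "qnum t T = 2 * \<rho> - 1
     \<and> xvec t T = - unitv 1 + (\<Sum>k=1..\<rho>-1. unitv (j k + 1)) - (\<Sum>l=2..\<rho>. unitv (i l))
     \<and> qnum t (ro t T) = 2 * \<rho> - 1
     \<and> xvec t (ro t T) = unitv 1 + (\<Sum>k=1..\<rho>-1. unitv (t - j k + 1)) - (\<Sum>l=2..\<rho>. unitv (t - i l + 2))
     \<and> xvec t (ro t T) = unitv 1 + vecmat t (vecmat t (xvec t T) (Ubar t)) (Tbar t)"
    proof (intro conjI)
      show "qnum t T = 2 * \<rho> - 1" using R2 q by simp
      show "qnum t (ro t T) = 2 * \<rho> - 1" using R4 q by simp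
      show "xvec t T = - unitv 1 + (\<Sum>k=1..\<rho>-1. unitv (j k + 1)) - (\<Sum>l=2..\<rho>. unitv (i l))"
        unfolding R1 by (simp add: vx_def fun_eq_iff sum_app)
      show "xvec t (ro t T) = unitv 1 + (\<Sum>k=1..\<rho>-1. unitv (t - j k + 1)) - (\<Sum>l=2..\<rho>. unitv (t - i l + 2))"
        unfolding R3 sJ2 sI2 by (simp add: vx_def fun_eq_iff sum_app)
      show "xvec t (ro t T) = unitv 1 + vecmat t (vecmat t (xvec t T) (Ubar t)) (Tbar t)"
        unfolding R5 by (simp add: fun_eq_iff)
    qed
  qed
  have case3: "{1, t} \<inter> A = {} \<longrightarrow>
       qnum t T = 2 * \<rho> + 1
     \<and> xvec t T = unitv 1 + (\<Sum>k=1..\<rho>. unitv (j k + 1)) - (\<Sum>l=1..\<rho>. unitv (i l))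
     \<and> qnum t (ro t T) = 2 * \<rho> + 1
     \<and> xvec t (ro t T) = - unitv 1 + (\<Sum>k=1..\<rho>. unitv (t - j k + 1)) - (\<Sum>l=1..\<rho>. unitv (t - i l + 2))
     \<and> xvec t (ro t T) = - unitv 1 + vecmat t (vecmat t (xvec t T) (Ubar t)) (Tbar t)"
  proof
    assume h: "{1, t} \<inter> A = {}"
    have oA: "1 \<notin> A" using h by blast
    have tA: "t \<notin> A" using h by blast

    have ar: "1 + real (card {1..\<rho>}) - real (card {1..\<rho>})
           - 2 * (\<Sum>k\<in>{1..\<rho>}. if e \<le> j k then 1 else 0) + 2 * (\<Sum>l\<in>{1..\<rho>}. if e < i l then 1 else 0)
           = (if e \<in> A then -1 else 1)" if e: "e \<in> {1..t}" for e
    proof -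
      have a: "True" by simp
      have b: "True" by simp

      show ?thesis
      proof (cases "e \<in> A")
        case True
        then have "(\<Sum>k\<in>{1..\<rho>}. if e \<le> j k then 1 else 0::real) - (\<Sum>k\<in>{1..\<rho>}. if e < i k then 1 else 0) = 1"
          using cnt[of e] by simp
        then show ?thesis using True a b c1 by simp
      next
        case False
        then have "(\<Sum>k\<in>{1..\<rho>}. if e \<le> j k then 1 else 0::real) - (\<Sum>k\<in>{1..\<rho>}. if e < i k then 1 else 0) = 0"
          using cnt[of e] by simp
        then show ?thesis using False a b c1 by simp
      qed
    qed
    have R: "xvec t T = vx 1 {1..\<rho>} (\<lambda>k. j k + 1) {1..\<rho>} i
   \<and> qnum t T = card {1..\<rho>} + card {1..\<rho>} + (if (1::real) = 0 then 0 else 1)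
   \<and> xvec t (ro t T) = vx (- 1) {1..\<rho>} (\<lambda>k. t + 2 - (j k + 1)) {1..\<rho>} (\<lambda>k. t + 2 - i k)
   \<and> qnum t (ro t T) = card {1..\<rho>} + card {1..\<rho>} + (if (1::real) = 0 then 0 else 1)
   \<and> xvec t (ro t T) = (\<lambda>n. - 1 * unitv 1 n) + vecmat t (vecmat t (xvec t T) (Ubar t)) (Tbar t)"
      by (rule Res) (use Kt1[OF tA] L22[OF oA] ar in auto)
    note R1 = R[THEN conjunct1] and R2 = R[THEN conjunct2, THEN conjunct1]
      and R3 = R[THEN conjunct2, THEN conjunct2, THEN conjunct1]
      and R4 = R[THEN conjunct2, THEN conjunct2, THEN conjunct2, THEN conjunct1]
      and R5 = R[THEN conjunct2, THEN conjunct2, THEN conjunct2, THEN conjunct2]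
    have q: "card {1..\<rho>} + card {1..\<rho>} + (if (1::real) = 0 then 0 else 1) = 2 * \<rho> + 1"
      using rho by simp
    show "qnum t T = 2 * \<rho> + 1
     \<and> xvec t T = unitv 1 + (\<Sum>k=1..\<rho>. unitv (j k + 1)) - (\<Sum>l=1..\<rho>. unitv (i l))
     \<and> qnum t (ro t T) = 2 * \<rho> + 1
     \<and> xvec t (ro t T) = - unitv 1 + (\<Sum>k=1..\<rho>. unitv (t - j k + 1)) - (\<Sum>l=1..\<rho>. unitv (t - i l + 2))
     \<and> xvec t (ro t T) = - unitv 1 + vecmat t (vecmat t (xvec t T) (Ubar t)) (Tbar t)"
    proof (intro conjI)
      show "qnum t T = 2 * \<rho> + 1" using R2 q by simp
      show "qnum t (ro t T) = 2 * \<rho> + 1" using R4 q by simp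
      show "xvec t T = unitv 1 + (\<Sum>k=1..\<rho>. unitv (j k + 1)) - (\<Sum>l=1..\<rho>. unitv (i l))"
        unfolding R1 by (simp add: vx_def fun_eq_iff sum_app)
      show "xvec t (ro t T) = - unitv 1 + (\<Sum>k=1..\<rho>. unitv (t - j k + 1)) - (\<Sum>l=1..\<rho>. unitv (t - i l + 2))"
        unfolding R3 sJ1 sI1 by (simp add: vx_def fun_eq_iff sum_app)
      show "xvec t (ro t T) = - unitv 1 + vecmat t (vecmat t (xvec t T) (Ubar t)) (Tbar t)"
        unfolding R5 by (simp add: fun_eq_iff)
    qed
  qed
  have case4: "{1, t} \<inter> A = {t} \<longrightarrow>
       qnum t T = 2 * \<rho> - 1
     \<and> xvec t T = (\<Sum>k=1..\<rho>-1. unitv (j k + 1)) - (\<Sum>l=1..\<rho>. unitv (i l))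
     \<and> qnum t (ro t T) = 2 * \<rho> - 1
     \<and> xvec t (ro t T) = (\<Sum>k=1..\<rho>-1. unitv (t - j k + 1)) - (\<Sum>l=1..\<rho>. unitv (t - i l + 2))
     \<and> xvec t (ro t T) = vecmat t (vecmat t (xvec t T) (Ubar t)) (Tbar t)"
  proof
    assume h: "{1, t} \<inter> A = {t}"
    have oA: "1 \<notin> A"
    proof
      assume "1 \<in> A" then have "1 \<in> {1, t} \<inter> A" by simp
      then have "1 \<in> {t}" using h by blast
      then show False using t3 by simp
    qed
    have tA: "t \<in> A" using h by blast

    have ar: "0 + real (card {1..\<rho>-1}) - real (card {1..\<rho>})
           - 2 * (\<Sum>k\<in>{1..\<rho>-1}. if e \<le> j k then 1 else 0) + 2 * (\<Sum>l\<in>{1..\<rho>}. if e < i l then 1 else 0)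
           = (if e \<in> A then -1 else 1)" if e: "e \<in> {1..t}" for e
    proof -
      have a: "True" by simp
      have b: "(\<Sum>k\<in>{1..\<rho>}. if e \<le> j k then 1 else 0::real) = (\<Sum>k\<in>{1..\<rho>-1}. if e \<le> j k then 1 else 0) + 1"
        using SJs[OF tA, of e] e by simp

      show ?thesis
      proof (cases "e \<in> A")
        case True
        then have "(\<Sum>k\<in>{1..\<rho>}. if e \<le> j k then 1 else 0::real) - (\<Sum>k\<in>{1..\<rho>}. if e < i k then 1 else 0) = 1"
          using cnt[of e] by simp
        then show ?thesis using True a b c1 by simp
      next
        case False
        then have "(\<Sum>k\<in>{1..\<rho>}. if e \<le> j k then 1 else 0::real) - (\<Sum>k\<in>{1..\<rho>}. if e < i k then 1 else 0) = 0"
          using cnt[of e] by simp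
        then show ?thesis using False a b c1 by simp
      qed
    qed
    have R: "xvec t T = vx 0 {1..\<rho>-1} (\<lambda>k. j k + 1) {1..\<rho>} i
   \<and> qnum t T = card {1..\<rho>-1} + card {1..\<rho>} + (if (0::real) = 0 then 0 else 1)
   \<and> xvec t (ro t T) = vx (- 0) {1..\<rho>-1} (\<lambda>k. t + 2 - (j k + 1)) {1..\<rho>} (\<lambda>k. t + 2 - i k)
   \<and> qnum t (ro t T) = card {1..\<rho>-1} + card {1..\<rho>} + (if (0::real) = 0 then 0 else 1)
   \<and> xvec t (ro t T) = (\<lambda>n. - 0 * unitv 1 n) + vecmat t (vecmat t (xvec t T) (Ubar t)) (Tbar t)"
      by (rule Res) (use Kt2 L22[OF oA] ar in auto)
    note R1 = R[THEN conjunct1] and R2 = R[THEN conjunct2, THEN conjunct1]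
      and R3 = R[THEN conjunct2, THEN conjunct2, THEN conjunct1]
      and R4 = R[THEN conjunct2, THEN conjunct2, THEN conjunct2, THEN conjunct1]
      and R5 = R[THEN conjunct2, THEN conjunct2, THEN conjunct2, THEN conjunct2]
    have q: "card {1..\<rho>-1} + card {1..\<rho>} + (if (0::real) = 0 then 0 else 1) = 2 * \<rho> - 1"
      using rho by simp
    show "qnum t T = 2 * \<rho> - 1
     \<and> xvec t T = (\<Sum>k=1..\<rho>-1. unitv (j k + 1)) - (\<Sum>l=1..\<rho>. unitv (i l))
     \<and> qnum t (ro t T) = 2 * \<rho> - 1
     \<and> xvec t (ro t T) = (\<Sum>k=1..\<rho>-1. unitv (t - j k + 1)) - (\<Sum>l=1..\<rho>. unitv (t - i l + 2))
     \<and> xvec t (ro t T) = vecmat t (vecmat t (xvec t T) (Ubar t)) (Tbar t)"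
    proof (intro conjI)
      show "qnum t T = 2 * \<rho> - 1" using R2 q by simp
      show "qnum t (ro t T) = 2 * \<rho> - 1" using R4 q by simp
      show "xvec t T = (\<Sum>k=1..\<rho>-1. unitv (j k + 1)) - (\<Sum>l=1..\<rho>. unitv (i l))"
        unfolding R1 by (simp add: vx_def fun_eq_iff sum_app)
      show "xvec t (ro t T) = (\<Sum>k=1..\<rho>-1. unitv (t - j k + 1)) - (\<Sum>l=1..\<rho>. unitv (t - i l + 2))"
        unfolding R3 sJ2 sI1 by (simp add: vx_def fun_eq_iff sum_app)
      show "xvec t (ro t T) = vecmat t (vecmat t (xvec t T) (Ubar t)) (Tbar t)"
        unfolding R5 by (simp add: fun_eq_iff)
    qed
  qed
  show ?thesis using case1 case2 case3 case4 by blast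
qed

end
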